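(* Let $\mathbb{L}=(\mathcal{P},\mathcal{C},\parallel)$ be a miquelian Laguerre plane of characteristic $2$. If $K,L,M$ are circles, $p$ is a point with $p\in K$ and $p\in L$, and each of $K$ and $L$ is tangent to $M$, then $K$ and $L$ are tangent at $p$.
   Context: A Laguerre plane is a triple $(\mathcal{P},\mathcal{C},\parallel)$ where $\mathcal{P}$ is a set of points, $\mathcal{C}\subset 2^{\mathcal{P}}$ a set of circles and $\parallel$ an equivalence relation on $\mathcal{P}$ (parallelism; its classes are called generators) such that: (1) any three pairwise non-parallel points lie on a unique circle; (2) for every circle $K$ and non-parallel points $p\in K$, $q\notin K$ there is exactly one circle $L$ with $q\in L$ and $K\cap L=\{p\}$; (3) for every point $p$ and circle $K$ there is exactly one point $q\in K$ with $q\parallel p$; (4) some circle contains at least three but not all points. Circles $K,L$ are tangent at $p$ if $K\cap L=\{p\}$ or $K=L$ (with $p\in K$); $K$ and $L$ are tangent if they are tangent at some point. A quadruple $(a,b,c,d)$ of points is concyclic, written $(a,b,c,d)_{\triangle}$, if $a,b,c,d$ lie on a common circle, or $a\parallel b$, $c\parallel d$ and $a\nparallel c$. The plane is miquelian if it satisfies Miquel's condition: for any eight distinct points $a,b,c,d,e,f,g,h$, the relations $(a,c,b,d)_{\triangle}$, $(a,e,b,h)_{\triangle}$, $(a,g,d,h)_{\triangle}$, $(b,f,c,e)_{\triangle}$, $(c,g,d,f)_{\triangle}$ imply $(e,g,f,h)_{\triangle}$. Miquelian Laguerre planes are exactly the classical ones over commutative fields $F$ (plane sections of a quadratic cone in the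 projective space over $F$); the characteristic of the plane is the characteristic of $F$. *)

theory Defs
  imports Main
begin

definition pairwise_nonpar :: "('p \<Rightarrow> 'p \<Rightarrow> bool) \<Rightarrow> 'p \<Rightarrow> 'p \<Rightarrow> 'p \<Rightarrow> bool" where
  "pairwise_nonpar par a b c \<longleftrightarrow> \<not> par a b \<and> \<not> par a c \<and> \<not> par b c"

definition laguerre_plane :: "'p set \<Rightarrow> 'p set set \<Rightarrow> ('p \<Rightarrow> 'p \<Rightarrow> bool) \<Rightarrow> bool" where
  "laguerre_plane P C par \<longleftrightarrow>
     (\<forall>K\<in>C. K \<subseteq> P) \<and>
     (\<forall>p q. par p q \<longrightarrow> p \<in> P \<and> q \<in> P) \<and>
     (\<forall>p\<in>P. par p p) \<and>
     (\<forall>p q. par p q \<longrightarrow> par q p) \<and>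
     (\<forall>p q r. par p q \<longrightarrow> par q r \<longrightarrow> par p r) \<and>
     (\<forall>a\<in>P. \<forall>b\<in>P. \<forall>c\<in>P. pairwise_nonpar par a b c \<longrightarrow>
        (\<exists>!K. K \<in> C \<and> a \<in> K \<and> b \<in> K \<and> c \<in> K)) \<and>
     (\<forall>K\<in>C. \<forall>p\<in>K. \<forall>q\<in>P. \<not> par p q \<longrightarrow> q \<notin> K \<longrightarrow>
        (\<exists>!L. L \<in> C \<and> q \<in> L \<and> K \<inter> L = {p})) \<and>
     (\<forall>p\<in>P. \<forall>K\<in>C. \<exists>!q. q \<in> K \<and> par q p) \<and>
     (\<exists>K\<in>C. (\<exists>a b c. a \<in> K \<and> b \<in> K \<and> c \<in> K \<and> a \<noteq> b \<and> a \<noteq> c \<and> b \<noteq> c) \<and> K \<noteq> P)"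

definition tangent_at :: "'p set \<Rightarrow> 'p set \<Rightarrow> 'p \<Rightarrow> bool" where
  "tangent_at K L p \<longleftrightarrow> p \<in> K \<and> p \<in> L \<and> (K \<inter> L = {p} \<or> K = L)"

definition tangent :: "'p set \<Rightarrow> 'p set \<Rightarrow> bool" where
  "tangent K L \<longleftrightarrow> (\<exists>p. tangent_at K L p)"

definition concyclic :: "'p set set \<Rightarrow> ('p \<Rightarrow> 'p \<Rightarrow> bool) \<Rightarrow> 'p \<Rightarrow> 'p \<Rightarrow> 'p \<Rightarrow> 'p \<Rightarrow> bool" where
  "concyclic C par a b c d \<longleftrightarrow>
     (\<exists>K\<in>C. a \<in> K \<and> b \<in> K \<and> c \<in> K \<and> d \<in> K) \<or> (par a b \<and> par c d \<and> \<not> par a c)"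

definition miquelian :: "'p set \<Rightarrow> 'p set set \<Rightarrow> ('p \<Rightarrow> 'p \<Rightarrow> bool) \<Rightarrow> bool" where
  "miquelian P C par \<longleftrightarrow>
     (\<forall>a b c d e f g h. {a,b,c,d,e,f,g,h} \<subseteq> P \<longrightarrow> distinct [a,b,c,d,e,f,g,h] \<longrightarrow>
        concyclic C par a c b d \<longrightarrow> concyclic C par a e b h \<longrightarrow> concyclic C par a g d h \<longrightarrow>
        concyclic C par b f c e \<longrightarrow> concyclic C par c g d f \<longrightarrow>
        concyclic C par e g f h)"

text \<open>The classical (miquelian) Laguerre plane over a field F (cylinder model):
  points (F \<union> {\<infinity>}) \<times> F, with None playing the role of \<infinity>;
  circles {(x, a x^2 + b x + c)} \<union> {(\<infinity>, a)}; parallel iff same first coordinate.\<close>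

definition classical_points :: "('f::field option \<times> 'f) set" where
  "classical_points = UNIV"

definition classical_circle :: "'f::field \<Rightarrow> 'f \<Rightarrow> 'f \<Rightarrow> ('f option \<times> 'f) set" where
  "classical_circle a b c = {(Some x, a * x^2 + b * x + c) | x. True} \<union> {(None, a)}"

definition classical_circles :: "('f::field option \<times> 'f) set set" where
  "classical_circles = {classical_circle a b c | a b c. True}"

definition classical_par :: "('f::field option \<times> 'f) \<Rightarrow> ('f option \<times> 'f) \<Rightarrow> bool" where
  "classical_par p q \<longleftrightarrow> fst p = fst q"

definition classical_iso :: "'p set \<Rightarrow> 'p set set \<Rightarrow> ('p \<Rightarrow> 'p \<Rightarrow> bool)
    \<Rightarrow> ('p \<Rightarrow> 'f::field option \<times> 'f) \<Rightarrow> bool" where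
  "classical_iso P C par \<phi> \<longleftrightarrow>
     bij_betw \<phi> P classical_points \<and>
     (\<forall>K. K \<subseteq> P \<longrightarrow> (K \<in> C \<longleftrightarrow> \<phi> ` K \<in> classical_circles)) \<and>
     (\<forall>p\<in>P. \<forall>q\<in>P. par p q \<longleftrightarrow> classical_par (\<phi> p) (\<phi> q))"

end

theory Submission
  imports Defs
begin

lemma mem_cc: "(u, y) \<in> classical_circle a b c \<longleftrightarrow>
   (case u of None \<Rightarrow> y = a | Some x \<Rightarrow> y = a*x^2+b*x+c)"
  by (cases u) (auto simp: classical_circle_def)

lemma two_mult: assumes "(2::'f::field) = 0" shows "2 * (z::'f) = 0"
  using assms by simp

lemma tanA:
  fixes a b c a' b' c' :: "'f::field"
  assumes two: "(2::'f) = 0"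
    and t: "tangent (classical_circle a b c) (classical_circle a' b' c')"
  shows "b = b'"
proof -
  let ?K = "classical_circle a b c" and ?M = "classical_circle a' b' c'"
  obtain q where q: "q \<in> ?K" "q \<in> ?M" "?K \<inter> ?M = {q} \<or> ?K = ?M"
    using t unfolding tangent_def tangent_at_def by blast
  show ?thesis
  proof (cases "?K = ?M")
    case True
    have "(None, a) \<in> ?K" by (simp add: mem_cc)
    hence "(None, a) \<in> ?M" using True by simp
    hence aa: "a = a'" by (simp add: mem_cc)
    have "(Some 0, c) \<in> ?M" using True[symmetric] by (simp add: mem_cc)
    hence cc: "c = c'" by (simp add: mem_cc)
    have "(Some 1, a+b+c) \<in> ?M" using True[symmetric] by (simp add: mem_cc)
    thus ?thesis using aa cc by (simp add: mem_cc)
  next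
    case False
    hence I: "?K \<inter> ?M = {q}" using q by blast
    show ?thesis
    proof (rule ccontr)
      assume ne: "b \<noteq> b'"
      show False
      proof (cases "a = a'")
        case True
        have "(None, a) \<in> ?K \<inter> ?M" using True by (simp add: mem_cc)
        hence qn: "q = (None, a)" using I by auto
        define x where "x = (c' - c) / (b - b')"
        have "(b - b') * x = c' - c" using ne unfolding x_def by simp
        hence "a * x^2 + b * x + c = a' * x^2 + b' * x + c'" using True
          by (simp add: algebra_simps)
        hence "(Some x, a * x^2 + b * x + c) \<in> ?K \<inter> ?M" by (simp add: mem_cc)
        thus False using I qn by blast
      next
        case aneq: False
        obtain u y where quy: "q = (u, y)" by (cases q)
        show False
        proof (cases u)
          case None
          then show False using q quy aneq by (simp add: mem_cc)
        next
          case (Some x0)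
          have y0: "y = a*x0^2+b*x0+c" "y = a'*x0^2+b'*x0+c'"
            using q quy Some by (simp_all add: mem_cc)
          define d where "d = a - a'"
          define e where "e = b - b'"
          define f where "f = c - c'"
          have dne: "d \<noteq> 0" using aneq d_def by simp
          have ene: "e \<noteq> 0" using ne e_def by simp
          have eq0: "d*x0^2 + e*x0 + f = 0" using y0 unfolding d_def e_def f_def
            by (simp add: algebra_simps)
          define x1 where "x1 = x0 + e/d"
          have "d*x1^2 + e*x1 + f = (d*x0^2 + e*x0 + f) + 2*(x0*e) + 2*(e*e/d)"
            unfolding x1_def using dne by (simp add: field_simps power2_eq_square)
          also have "\<dots> = 0" using eq0 two by simp
          finally have eq1: "d*x1^2 + e*x1 + f = 0" .
          hence "a * x1^2 + b * x1 + c = a' * x1^2 + b' * x1 + c'"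
            unfolding d_def e_def f_def by (simp add: algebra_simps)
          hence "(Some x1, a * x1^2 + b * x1 + c) \<in> ?K \<inter> ?M" by (simp add: mem_cc)
          hence "Some x1 = Some x0" using I quy Some by auto
          hence "e/d = 0" unfolding x1_def by simp
          thus False using dne ene by simp
        qed
      qed
    qed
  qed
qed

lemma tanB:
  fixes a b c a' c' :: "'f::field"
  assumes two: "(2::'f) = 0"
    and q: "q \<in> classical_circle a b c" "q \<in> classical_circle a' b c'"
  shows "tangent_at (classical_circle a b c) (classical_circle a' b c') q"
proof (cases "a = a' \<and> c = c'")
  case True
  then show ?thesis using q unfolding tangent_at_def by simp
next
  case False
  let ?K = "classical_circle a b c" and ?M = "classical_circle a' b c'"
  have "?K \<inter> ?M \<subseteq> {q}"
  proof
    fix r assume r: "r \<in> ?K \<inter> ?M"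
    have key: "\<And>u y. (u, y) \<in> ?K \<inter> ?M \<Longrightarrow> \<exists>x. u = Some x \<and> (a - a') * x^2 = c' - c
        \<and> y = a*x^2+b*x+c \<and> a \<noteq> a' \<or> (u = None \<and> y = a \<and> a = a')"
    proof -
      fix u y assume uy: "(u, y) \<in> ?K \<inter> ?M"
      show "?thesis u y"
      proof (cases u)
        case None
        then show ?thesis using uy False by (auto simp: mem_cc)
      next
        case (Some x)
        have e: "a*x^2+b*x+c = a'*x^2+b*x+c'" using uy Some by (auto simp: mem_cc)
        hence "(a - a') * x^2 = c' - c" by (simp add: algebra_simps)
        moreover have "a \<noteq> a'" using e False by auto
        ultimately show ?thesis using uy Some by (auto simp: mem_cc)
      qed
    qed
    obtain u y where ruy: "r = (u, y)" by (cases r)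
    obtain v z where qvz: "q = (v, z)" by (cases q)
    show "r \<in> {q}"
    proof (cases "a = a'")
      case True
      have "u = None \<and> y = a" using key[of u y] r ruy True by auto
      moreover have "v = None \<and> z = a" using key[of v z] q qvz True by auto
      ultimately show ?thesis using ruy qvz by simp
    next
      case aneq: False
    have A: "\<exists>x. u = Some x \<and> (a - a') * x^2 = c' - c \<and> y = a*x^2+b*x+c \<and> a \<noteq> a'"
      using key[of u y] r ruy aneq by auto
    have B: "\<exists>x. v = Some x \<and> (a - a') * x^2 = c' - c \<and> z = a*x^2+b*x+c \<and> a \<noteq> a'"
      using key[of v z] q qvz aneq by auto
    obtain x where x: "u = Some x" "(a - a') * x^2 = c' - c" "y = a*x^2+b*x+c" "a \<noteq> a'"
      using A by blast
    obtain w where w: "v = Some w" "(a - a') * w^2 = c' - c" "z = a*w^2+b*w+c"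
      using B by blast
    have "(a - a') * (x^2 - w^2) = (a - a') * x^2 - (a - a') * w^2" by (simp add: algebra_simps)
    also have "\<dots> = 0" using x(2) w(2) by simp
    finally have "(a - a') * (x^2 - w^2) = 0" .
    hence "x^2 - w^2 = 0" using x(4) by simp
    moreover have "x^2 - w^2 = (x - w)^2"
    proof -
      have "(x - w)^2 = x^2 - w^2 - 2*(x*w) + 2*(w*w)" by (simp add: algebra_simps power2_eq_square)
      thus ?thesis using two by simp
    qed
    ultimately have "x = w" by simp
    thus "r \<in> {q}" using x w ruy qvz by simp
    qed
  qed
  hence "?K \<inter> ?M = {q}" using q by blast
  thus ?thesis using q unfolding tangent_at_def by blast
qed

theorem proposition1p1:
  fixes P :: "'p set" and C :: "'p set set" and par :: "'p \<Rightarrow> 'p \<Rightarrow> bool"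
    and \<phi> :: "'p \<Rightarrow> 'f::field option \<times> 'f"
    and K L M :: "'p set" and p :: 'p
  assumes "laguerre_plane P C par"
    and "miquelian P C par"
    and "classical_iso P C par \<phi>"
    and "CHAR('f) = 2"
    and "K \<in> C" and "L \<in> C" and "M \<in> C"
    and "p \<in> K" and "p \<in> L"
    and "tangent K M" and "tangent L M"
  shows "tangent_at K L p"
proof -
  have two: "(2::'f) = 0" using assms(4) of_nat_CHAR[where 'a='f] by simp
  have sub: "K \<subseteq> P" "L \<subseteq> P" "M \<subseteq> P" using assms(1,5,6,7) unfolding laguerre_plane_def by auto
  have bij: "bij_betw \<phi> P classical_points" and circ: "\<And>K. K \<subseteq> P \<Longrightarrow> (K \<in> C \<longleftrightarrow> \<phi> ` K \<in> classical_circles)"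
    using assms(3) unfolding classical_iso_def by auto
  have inj: "inj_on \<phi> P" using bij bij_betw_def by blast
  have img_int: "\<And>A B. A \<subseteq> P \<Longrightarrow> B \<subseteq> P \<Longrightarrow> \<phi> ` (A \<inter> B) = \<phi> ` A \<inter> \<phi> ` B"
    using inj by (meson inj_on_image_Int)
  have tr: "\<And>A B. A \<subseteq> P \<Longrightarrow> B \<subseteq> P \<Longrightarrow> tangent A B \<Longrightarrow> tangent (\<phi> ` A) (\<phi> ` B)"
  proof -
    fix A B assume AB: "A \<subseteq> P" "B \<subseteq> P" "tangent A B"
    then obtain q where q: "q \<in> A" "q \<in> B" "A \<inter> B = {q} \<or> A = B"
      unfolding tangent_def tangent_at_def by blast
    have "\<phi> ` A \<inter> \<phi> ` B = {\<phi> q} \<or> \<phi> ` A = \<phi> ` B"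
      using q img_int[OF AB(1,2)] by auto
    thus "tangent (\<phi> ` A) (\<phi> ` B)" unfolding tangent_def tangent_at_def using q by blast
  qed
  obtain a1 b1 c1 where K': "\<phi> ` K = classical_circle a1 b1 c1"
    using circ[OF sub(1)] assms(5) unfolding classical_circles_def by auto
  obtain a2 b2 c2 where L': "\<phi> ` L = classical_circle a2 b2 c2"
    using circ[OF sub(2)] assms(6) unfolding classical_circles_def by auto
  obtain a3 b3 c3 where M': "\<phi> ` M = classical_circle a3 b3 c3"
    using circ[OF sub(3)] assms(7) unfolding classical_circles_def by auto
  have "b1 = b3" using tanA[OF two] tr[OF sub(1,3) assms(10)] K' M' by metis
  moreover have "b2 = b3" using tanA[OF two] tr[OF sub(2,3) assms(11)] L' M' by metis
  ultimately have "tangent_at (\<phi> ` K) (\<phi> ` L) (\<phi> p)"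
    using tanB[OF two, of "\<phi> p" a1 b1 c1 a2 c2] K' L' assms(8,9) by auto
  hence T: "\<phi> ` K \<inter> \<phi> ` L = {\<phi> p} \<or> \<phi> ` K = \<phi> ` L" unfolding tangent_at_def by blast
  have "K \<inter> L = {p} \<or> K = L"
  proof (cases "\<phi> ` K = \<phi> ` L")
    case True
    then have "K = L" using inj sub by (simp add: inj_on_image_eq_iff)
    then show ?thesis by blast
  next
    case False
    then have "\<phi> ` (K \<inter> L) = {\<phi> p}" using T img_int[OF sub(1,2)] by simp
    moreover have "p \<in> K \<inter> L" using assms(8,9) by simp
    ultimately have "K \<inter> L = {p}"
    proof -
      have "\<And>r. r \<in> K \<inter> L \<Longrightarrow> r = p"
      proof -
        fix r assume r: "r \<in> K \<inter> L"
        hence "\<phi> r = \<phi> p" using \<open>\<phi> ` (K \<inter> L) = {\<phi> p}\<close> by blast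
        thus "r = p" using inj sub r assms(8) unfolding inj_on_def by blast
      qed
      thus ?thesis using \<open>p \<in> K \<inter> L\<close> by blast
    qed
    then show ?thesis by blast
  qed
  thus ?thesis unfolding tangent_at_def using assms(8,9) by blast
qed

end
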